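(* Let $I$ be a set. Let $T_1,T_2$ be nonempty $I$-colored binary plane trees and let $v$ be a vertex of $T_1$. Then the multiset $\mathsf{IF}(\nabla_v(T_1,T_2))$ of insertion factors of the insertion $\nabla_v(T_1,T_2)$ is the multiset union of $\mathsf{IF}(T_1)$ and $\mathsf{IF}(T_2)$.
   Context: A binary plane tree is a rooted tree in which each child of a vertex is designated as a left child or a right child, and no vertex has more than one left child or more than one right child; trees are considered up to isomorphism, and the empty tree $\varnothing$ is allowed. The left (right) subtree of a vertex is the subtree rooted at its left (right) child. A branch is a nonempty binary plane tree in which every vertex has at most one child. Let $\boxminus$ be a special symbol not a vertex of any tree. An $I$-coloring of a binary plane tree $T$ is a function $\chi\colon T\sqcup\{\boxminus\}\to I$ (here $T$ also denotes its vertex set); an $I$-colored binary plane tree is a binary plane tree together with an $I$-coloring. Insertion: for nonempty $I$-colored trees $T_1,T_2$ with colorings $\chi_1,\chi_2$ and a vertex $v$ of $T_1$, the tree $\nabla_v(T_1,T_2)$ is formed as follows: replace $v$ by a left edge, i.e. create a new vertex $v^*$ that takes the place of $v$ in $T_1$ (attached to $v$'s former parent on the same side), and make $v$ (with its subtrees) the left child of $v^*$; then attach $T_2$ as the right subtree of $v^*$. Its coloring $\chi$ satisfies $\chi(u)=\chi_1(u)$ for $u\in T_1\sqcup\{\boxminus\}$, $\chi(u')=\chi_2(u')$ for $u'\in T_2$, and $\chi(v^* )=\chi_2(\boxminus)$. Insertion factors: for a nonempty $I$-colored tree $T$, let $\Lambda_T$ consist of $\boxminus$ together with the vertices of $T$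 having two children. Define $\gamma\colon T\cup\{\boxminus\}\to\Lambda_T$ by: $\gamma(u)=u$ if $u\in\Lambda_T$; otherwise, if some vertex $w\in\Lambda_T\setminus\{\boxminus\}$ has $u$ in its right subtree, $\gamma(u)$ is the lowest (deepest) such $w$; otherwise $\gamma(u)=\boxminus$. For $v\in\Lambda_T$, the tree $T_v$ has vertex set $\gamma^{-1}(v)\setminus\{v\}$, where for $u,w$ in this set, $w$ is a left (resp. right) child of $u$ in $T_v$ iff $w$ lies in the left (resp. right) subtree of $u$ in $T$ and no element of $\gamma^{-1}(v)$ lies strictly between $u$ and $w$ on the path in $T$; each such vertex keeps its color from $T$, and $\boxminus$ in $T_v$ is given the color of $v$ in $T$ (the color of $\boxminus$ in $T$ if $v=\boxminus$). Each $T_v$ is an $I$-colored branch, and the multiset of the $T_v$ ($v\in\Lambda_T$), taken up to isomorphism of $I$-colored trees, is denoted $\mathsf{IF}(T)$. *)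

theory Defs
  imports "HOL-Library.Tree" "HOL-Library.Multiset" "HOL-Library.Sublist"
begin

text \<open>Binary plane trees up to isomorphism are represented by the datatype
  \<open>'a tree\<close> (Leaf = empty tree), vertex labels being the colours.
  An I-coloured binary plane tree is a pair (tree, colour of the special symbol).
  A vertex is addressed by its path from the root: False = go to the left child,
  True = go to the right child.\<close>

type_synonym 'a ctree = "'a tree \<times> 'a"

fun subtree_at :: "'a tree \<Rightarrow> bool list \<Rightarrow> 'a tree" where
  "subtree_at t [] = t"
| "subtree_at Leaf (_ # _) = Leaf"
| "subtree_at (Node l a r) (False # p) = subtree_at l p"
| "subtree_at (Node l a r) (True # p) = subtree_at r p"

fun positions :: "'a tree \<Rightarrow> bool list list" where
  "positions Leaf = []"
| "positions (Node l a r) = [] # map (Cons False) (positions l) @ map (Cons True) (positions r)"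

definition label_at :: "'a tree \<Rightarrow> bool list \<Rightarrow> 'a" where
  "label_at t p = (case subtree_at t p of Node _ a _ \<Rightarrow> a | Leaf \<Rightarrow> undefined)"

definition two_children :: "'a tree \<Rightarrow> bool list \<Rightarrow> bool" where
  "two_children t p \<longleftrightarrow> (case subtree_at t p of
      Node l _ r \<Rightarrow> l \<noteq> Leaf \<and> r \<noteq> Leaf | Leaf \<Rightarrow> False)"

fun upd_at :: "('a tree \<Rightarrow> 'a tree) \<Rightarrow> bool list \<Rightarrow> 'a tree \<Rightarrow> 'a tree" where
  "upd_at f [] t = f t"
| "upd_at f (_ # _) Leaf = Leaf"
| "upd_at f (False # p) (Node l a r) = Node (upd_at f p l) a r"
| "upd_at f (True # p) (Node l a r) = Node l a (upd_at f p r)"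

definition insertion :: "bool list \<Rightarrow> 'a ctree \<Rightarrow> 'a ctree \<Rightarrow> 'a ctree" where
  "insertion p T1 T2 = (upd_at (\<lambda>s. Node s (snd T2) (fst T2)) p (fst T1), snd T1)"

text \<open>Induced tree on a set of positions of t: the root is an element of minimal depth;
  the left (right) child of u is the topmost element lying in the left (right) subtree of u.\<close>
function induce :: "'a tree \<Rightarrow> bool list list \<Rightarrow> 'a tree" where
  "induce t ps = (if ps = [] then Leaf else
     (let r = hd (sort_key length ps) in
       Node (induce t [q\<leftarrow>ps. prefix (r @ [False]) q]) (label_at t r)
            (induce t [q\<leftarrow>ps. prefix (r @ [True]) q])))"
  by pat_completeness auto
termination
proof (relation "measure (\<lambda>(t, ps). length ps)")
  show "wf (measure (\<lambda>(t, ps). length ps))" by simp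
next
  fix t :: "'a tree" and ps :: "bool list list" and r
  assume ne: "ps \<noteq> []" and r: "r = hd (sort_key length ps)"
  have rin: "r \<in> set ps" using ne r
    by (metis hd_in_set length_0_conv length_sort set_sort)
  show "((t, [q\<leftarrow>ps. prefix (r @ [False]) q]), t, ps) \<in> measure (\<lambda>(t, ps). length ps)"
    using rin by (auto intro!: length_filter_less)
  show "((t, [q\<leftarrow>ps. prefix (r @ [True]) q]), t, ps) \<in> measure (\<lambda>(t, ps). length ps)"
    using rin by (auto intro!: length_filter_less)
qed

text \<open>The map \<open>\<gamma>\<close>: None stands for the special symbol.\<close>
definition gamma :: "'a tree \<Rightarrow> bool list \<Rightarrow> bool list option" where
  "gamma t u = (if two_children t u then Some u
     else if \<exists>w. two_children t w \<and> prefix (w @ [True]) u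
     then Some (THE w. two_children t w \<and> prefix (w @ [True]) u \<and>
                  (\<forall>w'. two_children t w' \<and> prefix (w' @ [True]) u \<longrightarrow> length w' \<le> length w))
     else None)"

text \<open>\<open>\<Lambda>_T\<close>, as a list without repetitions.\<close>
definition Lambda :: "'a tree \<Rightarrow> bool list option list" where
  "Lambda t = None # map Some (filter (two_children t) (positions t))"

definition factor :: "'a ctree \<Rightarrow> bool list option \<Rightarrow> 'a ctree" where
  "factor T v =
     (induce (fst T) [u\<leftarrow>positions (fst T). gamma (fst T) u = v \<and> v \<noteq> Some u],
      (case v of None \<Rightarrow> snd T | Some p \<Rightarrow> label_at (fst T) p))"

definition IF :: "'a ctree \<Rightarrow> 'a ctree multiset" where
  "IF T = image_mset (factor T) (mset (Lambda (fst T)))"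

end

theory Submission
  imports Defs
begin


lemma subtree_at_Leaf[simp]: "subtree_at Leaf p = Leaf"
  by (cases p) auto

lemma subtree_at_append: "subtree_at t (p @ q) = subtree_at (subtree_at t p) q"
  by (induction t p rule: subtree_at.induct) auto

lemma pos_iff: "p \<in> set (positions t) \<longleftrightarrow> subtree_at t p \<noteq> Leaf"
proof (induction t arbitrary: p)
  case Leaf
  then show ?case by simp
next
  case (Node l a r)
  show ?case
  proof (cases p)
    case Nil
    then show ?thesis by simp
  next
    case (Cons d p')
    then show ?thesis using Node by (cases d) auto
  qed
qed

lemma distinct_positions: "distinct (positions t)"
  by (induction t) (auto simp: distinct_map)

lemma prefix_closed: "subtree_at t (p @ q) \<noteq> Leaf \<Longrightarrow> subtree_at t p \<noteq> Leaf"
  by (auto simp: subtree_at_append)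

lemma tc_intro: "subtree_at t (c @ [False]) \<noteq> Leaf \<Longrightarrow> subtree_at t (c @ [True]) \<noteq> Leaf
   \<Longrightarrow> two_children t c"
  unfolding two_children_def subtree_at_append
  by (cases "subtree_at t c") auto

definition cand :: "'a tree \<Rightarrow> bool list \<Rightarrow> bool list \<Rightarrow> bool" where
  "cand t u w \<longleftrightarrow> two_children t w \<and> prefix (w @ [True]) u"

lemma G1: "two_children t u \<Longrightarrow> gamma t u = Some u"
  by (simp add: gamma_def)

lemma prefix_antisym_len: "prefix a b \<Longrightarrow> length b \<le> length a \<Longrightarrow> a = b"
  unfolding prefix_def by auto

lemma G2: assumes "\<not> two_children t u" "cand t u w" "\<forall>w'. cand t u w' \<longrightarrow> prefix w' w"
  shows "gamma t u = Some w"
proof -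
  have ex: "\<exists>w. two_children t w \<and> prefix (w @ [True]) u" using assms(2) by (auto simp: cand_def)
  have "(THE w'. two_children t w' \<and> prefix (w' @ [True]) u \<and>
                  (\<forall>w''. two_children t w'' \<and> prefix (w'' @ [True]) u \<longrightarrow> length w'' \<le> length w')) = w"
  proof (rule the_equality)
    show "two_children t w \<and> prefix (w @ [True]) u \<and>
         (\<forall>w''. two_children t w'' \<and> prefix (w'' @ [True]) u \<longrightarrow> length w'' \<le> length w)"
      using assms(2,3) by (auto simp: cand_def prefix_length_le)
  next
    fix y assume y: "two_children t y \<and> prefix (y @ [True]) u \<and>
         (\<forall>w''. two_children t w'' \<and> prefix (w'' @ [True]) u \<longrightarrow> length w'' \<le> length y)"
    then have "prefix y w" using assms(3) by (auto simp: cand_def)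
    moreover have "length w \<le> length y" using y assms(2) by (auto simp: cand_def)
    ultimately show "y = w" using prefix_antisym_len by blast
  qed
  then show ?thesis using assms(1) ex by (simp add: gamma_def)
qed

lemma G3: "\<not> two_children t u \<Longrightarrow> (\<forall>w. \<not> cand t u w) \<Longrightarrow> gamma t u = None"
  by (auto simp: gamma_def cand_def)

lemma G4: assumes "cand t u w0" shows "\<exists>w. cand t u w \<and> (\<forall>w'. cand t u w' \<longrightarrow> prefix w' w)"
proof -
  define S where "S = {w. cand t u w}"
  have fin: "finite S"
    by (rule finite_subset[of _ "set (prefixes u)"]) (auto simp: S_def cand_def dest: prefix_snocD prefix_order.less_imp_le)
  have ne: "length w0 \<in> length ` S" using assms by (auto simp: S_def)
  have "Max (length ` S) \<in> length ` S" using fin ne by (intro Max_in) auto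
  then obtain w where w: "w \<in> S" "length w = Max (length ` S)" by auto
  have "\<forall>w'. cand t u w' \<longrightarrow> prefix w' w"
  proof (intro allI impI)
    fix w' assume c: "cand t u w'"
    then have "length w' \<le> length w" using w fin by (auto simp: S_def)
    moreover have "prefix w' u" "prefix w u" using c w
      by (auto simp: S_def cand_def dest: prefix_snocD prefix_order.less_imp_le)
    ultimately show "prefix w' w" using prefix_length_prefix by blast
  qed
  then show ?thesis using w by (auto simp: S_def)
qed

lemma G5: assumes "gamma t u = Some w" "\<not> two_children t u"
  shows "cand t u w \<and> (\<forall>w'. cand t u w' \<longrightarrow> prefix w' w)"
proof (cases "\<exists>w0. cand t u w0")
  case True
  then obtain w1 where "cand t u w1" "\<forall>w'. cand t u w' \<longrightarrow> prefix w' w1" using G4 by blast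
  moreover then have "gamma t u = Some w1" using G2 assms(2) by blast
  ultimately show ?thesis using assms by simp
next
  case False
  then show ?thesis using G3 assms by force
qed

lemma chain_aux:
  assumes "subtree_at t (c @ False # bs) \<noteq> Leaf" "subtree_at t (c @ True # cs) \<noteq> Leaf"
    "gamma t (c @ False # bs) = x" "gamma t (c @ True # cs) = x"
    "x \<noteq> Some (c @ False # bs)" "x \<noteq> Some (c @ True # cs)"
  shows False
proof -
  have "two_children t c"
  proof (rule tc_intro)
    show "subtree_at t (c @ [False]) \<noteq> Leaf" using prefix_closed[of t "c @ [False]" bs] assms(1) by simp
    show "subtree_at t (c @ [True]) \<noteq> Leaf" using prefix_closed[of t "c @ [True]" cs] assms(2) by simp
  qed
  then have cc: "cand t (c @ True # cs) c" by (simp add: cand_def)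
  have n2: "\<not> two_children t (c @ True # cs)" using G1 assms(4,6) by blast
  obtain w where w: "cand t (c @ True # cs) w" "\<forall>w'. cand t (c @ True # cs) w' \<longrightarrow> prefix w' w"
    using G4 cc by blast
  have g2: "gamma t (c @ True # cs) = Some w" using G2 n2 w by blast
  have n1: "\<not> two_children t (c @ False # bs)" using G1 assms(3,4,5) g2 by force
  have "cand t (c @ False # bs) w" using G5[OF _ n1] assms(3,4) g2 by simp
  then have p1: "prefix (w @ [True]) (c @ False # bs)" by (simp add: cand_def)
  have p2: "prefix (w @ [True]) (c @ True # cs)" using w by (simp add: cand_def)
  have "prefix c w" using w cc by blast
  then obtain z where z: "w = c @ z" by (auto simp: prefix_def)
  show False using p1 p2 unfolding z by (cases z) auto
qed

lemma chain:
  assumes "a \<in> set (positions t)" "b \<in> set (positions t)"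
    "gamma t a = x" "gamma t b = x" "x \<noteq> Some a" "x \<noteq> Some b"
  shows "prefix a b \<or> prefix b a"
proof (rule ccontr)
  assume "\<not> ?thesis"
  then have par: "a \<parallel> b" by (simp add: parallel_def)
  obtain c d bs e cs where de: "d \<noteq> e" and ab: "a = c @ d # bs" "b = c @ e # cs"
    using parallel_decomp[OF par] by blast
  have a1: "subtree_at t a \<noteq> Leaf" and b1: "subtree_at t b \<noteq> Leaf"
    using assms(1,2) pos_iff by blast+
  show False
  proof (cases d)
    case True
    then have "e = False" using de by simp
    then show False using chain_aux[of t c cs bs x] a1 b1 assms(3-6) True unfolding ab by simp
  next
    case False
    then have "e = True" using de by simp
    then show False using chain_aux[of t c bs cs x] a1 b1 assms(3-6) False unfolding ab by simp
  qed
qed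

definition sh :: "bool list \<Rightarrow> bool list \<Rightarrow> bool list" where
  "sh v u = (if prefix v u then v @ False # drop (length v) u else u)"

lemma sh_app[simp]: "sh v (v @ q) = v @ False # q"
  by (simp add: sh_def)

lemma sh_not[simp]: "\<not> prefix v u \<Longrightarrow> sh v u = u"
  by (simp add: sh_def)

lemma prefix_app_not: "\<not> prefix v a \<Longrightarrow> prefix a (v @ x) \<longleftrightarrow> prefix a v"
proof
  assume nv: "\<not> prefix v a" and p: "prefix a (v @ x)"
  have "prefix v (v @ x)" by simp
  then have "prefix a v \<or> prefix v a" using p prefix_same_cases by blast
  then show "prefix a v" using nv by blast
next
  assume "prefix a v"
  then show "prefix a (v @ x)" by (auto simp: prefix_def)
qed

lemma prefix_app_D: "prefix (v @ x) b \<Longrightarrow> prefix v b"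
  by (auto simp: prefix_def)

lemma L1: "prefix (sh v a) (sh v b) \<longleftrightarrow> prefix a b"
proof (cases "prefix v a")
  case True
  then obtain a' where a: "a = v @ a'" by (auto simp: prefix_def)
  show ?thesis
  proof (cases "prefix v b")
    case True
    then obtain b' where b: "b = v @ b'" by (auto simp: prefix_def)
    show ?thesis unfolding a b by simp
  next
    case False
    then show ?thesis unfolding a by (auto dest: prefix_app_D)
  qed
next
  case False
  show ?thesis
  proof (cases "prefix v b")
    case True
    then obtain b' where b: "b = v @ b'" by (auto simp: prefix_def)
    show ?thesis unfolding b by (simp only: sh_app sh_not[OF False] prefix_app_not[OF False])
  next
    case False
    then show ?thesis using \<open>\<not> prefix v a\<close> by simp
  qed
qed

lemma sh_inj: "sh v a = sh v b \<Longrightarrow> a = b"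
proof -
  assume e: "sh v a = sh v b"
  have "prefix a b" using L1[of v a b] e by simp
  moreover have "prefix b a" using L1[of v b a] e by simp
  ultimately show "a = b" by (rule prefix_order.antisym)
qed

lemma L2: "prefix (sh v a @ [d]) (sh v b) \<longleftrightarrow> prefix (a @ [d]) b"
proof (cases "prefix v a")
  case True
  then obtain a' where a: "a = v @ a'" by (auto simp: prefix_def)
  show ?thesis
  proof (cases "prefix v b")
    case True
    then obtain b' where b: "b = v @ b'" by (auto simp: prefix_def)
    show ?thesis unfolding a b by simp
  next
    case False
    then show ?thesis unfolding a by (auto dest: prefix_app_D)
  qed
next
  case na: False
  show ?thesis
  proof (cases "prefix v b")
    case True
    then obtain b' where b: "b = v @ b'" by (auto simp: prefix_def)
    show ?thesis
    proof (cases "v = a @ [d]")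
      case True
      show ?thesis by (simp only: b sh_app sh_not[OF na]) (simp add: True)
    next
      case False
      then have F: "\<not> prefix v (a @ [d])" using na by simp
      have e1: "prefix (a @ [d]) (v @ False # b') = prefix (a @ [d]) v" by (rule prefix_app_not[OF F])
      have e2: "prefix (a @ [d]) (v @ b') = prefix (a @ [d]) v" by (rule prefix_app_not[OF F])
      show ?thesis by (simp only: b sh_app sh_not[OF na] e1 e2)
    qed
  next
    case False
    then show ?thesis using na by simp
  qed
qed

lemma L5: "\<not> prefix (v @ [True]) (sh v u)"
  by (cases "prefix v u") (auto simp: sh_def dest: prefix_snocD prefix_order.less_imp_le)

lemma L5b: "\<not> prefix (v @ True # q) (sh v u)"
proof
  assume "prefix (v @ True # q) (sh v u)"
  then have "prefix (v @ [True]) (sh v u)" by (auto simp: prefix_def)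
  then show False using L5 by blast
qed

lemma L6: "sh v u \<noteq> v"
  by (cases "prefix v u") (auto simp: sh_def)

lemma L7: "sh v u \<noteq> v @ True # q"
proof
  assume "sh v u = v @ True # q"
  then have "prefix (v @ True # q) (sh v u)" by simp
  then show False using L5b by blast
qed

lemma L8: "prefix (sh v w @ [True]) (v @ True # q) \<Longrightarrow> prefix (sh v w) v"
proof (cases "prefix v w")
  case True
  then obtain w' where "w = v @ w'" by (auto simp: prefix_def)
  then show "prefix (sh v w @ [True]) (v @ True # q) \<Longrightarrow> prefix (sh v w) v" by simp
next
  case False
  assume "prefix (sh v w @ [True]) (v @ True # q)"
  then have "prefix w (v @ True # q)" using False by (auto dest: prefix_snocD prefix_order.less_imp_le)
  then show ?thesis using False prefix_app_not[OF False, of "True # q"] by simp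
qed

lemma classify: "(\<exists>u. x = sh v u) \<or> x = v \<or> (\<exists>q. x = v @ True # q)"
proof (cases "prefix v x")
  case True
  then obtain q where q: "x = v @ q" by (auto simp: prefix_def)
  show ?thesis
  proof (cases q)
    case Nil then show ?thesis using q by simp
  next
    case (Cons d q')
    then show ?thesis using q by (cases d) (auto intro: exI[of _ "v @ q'"])
  qed
next
  case False
  then have "x = sh v x" by simp
  then show ?thesis by blast
qed



declare induce.simps[simp del]

definition ri :: "'a tree \<Rightarrow> (bool \<times> 'a \<times> bool) option" where
  "ri t = (case t of Leaf \<Rightarrow> None | Node l a r \<Rightarrow> Some (l = Leaf, a, r = Leaf))"

lemma ri_eq: "ri (subtree_at t p) = ri (subtree_at t' p') \<Longrightarrow>
  two_children t p = two_children t' p' \<and> label_at t p = label_at t' p' \<and>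
  (subtree_at t p = Leaf \<longleftrightarrow> subtree_at t' p' = Leaf)"
  unfolding two_children_def label_at_def ri_def
  by (cases "subtree_at t p"; cases "subtree_at t' p'") auto

lemma upd_nonLeaf: "subtree_at t p \<noteq> Leaf \<Longrightarrow> (\<forall>s. f s \<noteq> Leaf) \<Longrightarrow> upd_at f p t \<noteq> Leaf"
  by (induction f p t rule: upd_at.induct) auto

lemma S1: "subtree_at t1 v \<noteq> Leaf \<Longrightarrow>
  subtree_at (upd_at f v t1) (v @ q) = subtree_at (f (subtree_at t1 v)) q"
  by (induction f v t1 rule: upd_at.induct) auto

lemma S2: "\<not> prefix v u \<Longrightarrow> subtree_at t1 v \<noteq> Leaf \<Longrightarrow> (\<forall>s. f s \<noteq> Leaf) \<Longrightarrow>
  ri (subtree_at (upd_at f v t1) u) = ri (subtree_at t1 u)"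
proof (induction u arbitrary: v t1)
  case Nil
  then obtain d v' where v: "v = d # v'" by (cases v) auto
  obtain l a r where t1: "t1 = Node l a r" using Nil(2) v by (cases t1) auto
  show ?case
  proof (cases d)
    case True
    then have "subtree_at r v' \<noteq> Leaf" using Nil(2) v t1 by simp
    moreover then have "r \<noteq> Leaf" by auto
    ultimately show ?thesis using upd_nonLeaf[of r v' f] Nil(3) True by (simp add: v t1 ri_def)
  next
    case False
    then have "subtree_at l v' \<noteq> Leaf" using Nil(2) v t1 by simp
    moreover then have "l \<noteq> Leaf" by auto
    ultimately show ?thesis using upd_nonLeaf[of l v' f] Nil(3) False by (simp add: v t1 ri_def)
  qed
next
  case (Cons e u')
  then obtain d v' where v: "v = d # v'" by (cases v) auto
  obtain l a r where t1: "t1 = Node l a r" using Cons(3) v by (cases t1) auto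
  show ?case
  proof (cases "d = e")
    case True
    then have "\<not> prefix v' u'" using Cons(2) v by simp
    then show ?thesis using Cons.IH[of v'] Cons(3,4) True v t1 by (cases d) auto
  next
    case False
    then show ?thesis using v t1 by (cases d; cases e) auto
  qed
qed

lemma hd_sort_min: assumes "xs \<noteq> []"
  shows "hd (sort_key f xs) \<in> set xs \<and> (\<forall>x\<in>set xs. f (hd (sort_key f xs)) \<le> f x)"
proof -
  have "set (sort_key f xs) \<noteq> {}" using assms by simp
  then obtain y ys where e: "sort_key f xs = y # ys"
    by (cases "sort_key f xs") auto
  have "set (sort_key f xs) = set xs" by simp
  moreover have "sorted (map f (sort_key f xs))" by (rule sorted_sort_key)
  ultimately show ?thesis using e by auto
qed

lemma induce_transfer:
  assumes "set qs = f ` set ps"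
   "\<forall>a\<in>set ps. \<forall>b\<in>set ps. prefix a b \<or> prefix b a"
   "\<forall>a\<in>set ps. \<forall>b\<in>set ps. prefix a b \<longleftrightarrow> prefix (f a) (f b)"
   "\<forall>a\<in>set ps. \<forall>b\<in>set ps. \<forall>d. prefix (a @ [d]) b \<longleftrightarrow> prefix (f a @ [d]) (f b)"
   "\<forall>a\<in>set ps. label_at t' (f a) = label_at t a"
  shows "induce t' qs = induce t ps"
  using assms
proof (induction ps arbitrary: qs rule: length_induct)
  case (1 ps)
  show ?case
  proof (cases "ps = []")
    case True
    then have "qs = []" using 1(2) by simp
    then show ?thesis using True by (simp add: induce.simps)
  next
    case False
    define r where "r = hd (sort_key length ps)"
    have r: "r \<in> set ps" "\<forall>x\<in>set ps. length r \<le> length x"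
      using hd_sort_min[OF False, of length] unfolding r_def by auto
    have qne: "qs \<noteq> []" using 1(2) False by auto
    define r' where "r' = hd (sort_key length qs)"
    have r': "r' \<in> set qs" "\<forall>x\<in>set qs. length r' \<le> length x"
      using hd_sort_min[OF qne, of length] unfolding r'_def by auto
    have rmin: "prefix r x" if "x \<in> set ps" for x
    proof -
      have "prefix r x \<or> prefix x r" using 1(3) r(1) that by blast
      moreover have "prefix x r \<Longrightarrow> x = r" using r(2) that prefix_antisym_len by blast
      ultimately show ?thesis by auto
    qed
    have rr: "r' = f r"
    proof -
      obtain a where a: "a \<in> set ps" "r' = f a" using r'(1) 1(2) by auto
      have "prefix (f r) (f a)" using rmin[OF a(1)] 1(4) r(1) a(1) by blast
      moreover have "length r' \<le> length (f r)" using r'(2) 1(2) r(1) by auto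
      ultimately have "prefix (f r) r'" "length r' \<le> length (f r)" using a(2) by simp_all
      then show ?thesis using prefix_antisym_len[of "f r" r'] by simp
    qed
    have ch: "induce t' [q\<leftarrow>qs. prefix (r' @ [d]) q] = induce t [q\<leftarrow>ps. prefix (r @ [d]) q]" for d
    proof -
      have len: "length [q\<leftarrow>ps. prefix (r @ [d]) q] < length ps"
        using r(1) by (intro length_filter_less) (auto dest: prefix_length_le)
      have P: "\<And>b. b \<in> set ps \<Longrightarrow> prefix (f r @ [d]) (f b) \<longleftrightarrow> prefix (r @ [d]) b"
        using 1(5) r(1) by blast
      have st: "set [q\<leftarrow>qs. prefix (r' @ [d]) q] = f ` set [q\<leftarrow>ps. prefix (r @ [d]) q]"
        unfolding rr set_filter 1(2) using P by auto
      show ?thesis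
        by (rule 1(1)[rule_format, OF len st]) (use 1(3-6) in auto)
    qed
    have "induce t' qs = Node (induce t' [q\<leftarrow>qs. prefix (r' @ [False]) q]) (label_at t' r')
            (induce t' [q\<leftarrow>qs. prefix (r' @ [True]) q])"
      by (subst induce.simps) (simp add: qne r'_def Let_def)
    also have "\<dots> = Node (induce t [q\<leftarrow>ps. prefix (r @ [False]) q]) (label_at t r)
            (induce t [q\<leftarrow>ps. prefix (r @ [True]) q])"
      using ch 1(6) r(1) rr by simp
    also have "\<dots> = induce t ps"
    proof -
      have "induce t ps = Node (induce t [q\<leftarrow>ps. prefix (r @ [False]) q]) (label_at t r)
            (induce t [q\<leftarrow>ps. prefix (r @ [True]) q])"
        by (subst induce.simps) (simp add: False r_def Let_def)
      then show ?thesis by simp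
    qed
    finally show ?thesis .
  qed
qed



definition FS :: "'a tree \<Rightarrow> bool list option \<Rightarrow> bool list set" where
  "FS t x = {u \<in> set (positions t). gamma t u = x \<and> x \<noteq> Some u}"

lemma map_option_sh_inj: "map_option (sh v) a = map_option (sh v) b \<Longrightarrow> a = b"
  by (cases a; cases b) (auto dest: sh_inj)

definition hh :: "bool list \<Rightarrow> bool list option \<Rightarrow> bool list" where
  "hh v x = (case x of None \<Rightarrow> v | Some w \<Rightarrow> v @ True # w)"

lemma hh_inj: "hh v x = hh v y \<Longrightarrow> x = y"
  by (cases x; cases y) (auto simp: hh_def)

lemma sh_hh: "sh v p \<noteq> hh v x"
  using L6 L7 by (cases x) (auto simp: hh_def)

context
  fixes v :: "bool list" and t1 t2 :: "'a tree" and c2 :: 'a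
  assumes vpos: "subtree_at t1 v \<noteq> Leaf" and t2ne: "t2 \<noteq> Leaf"
begin

abbreviation "tt \<equiv> upd_at (\<lambda>s. Node s c2 t2) v t1"

lemma T1: "ri (subtree_at tt (sh v u)) = ri (subtree_at t1 u)"
proof (cases "prefix v u")
  case True
  then obtain q where u: "u = v @ q" by (auto simp: prefix_def)
  have "subtree_at tt (v @ (False # q)) = subtree_at (Node (subtree_at t1 v) c2 t2) (False # q)"
    by (rule S1[OF vpos])
  also have "\<dots> = subtree_at t1 (v @ q)" by (simp add: subtree_at_append)
  finally show ?thesis unfolding u by simp
next
  case False
  then show ?thesis using S2[OF False vpos, of "\<lambda>s. Node s c2 t2"] by simp
qed

lemma T2: "subtree_at tt (v @ True # q) = subtree_at t2 q"
  using S1[OF vpos, of "\<lambda>s. Node s c2 t2" "True # q"] by simp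

lemma T3: "subtree_at tt v = Node (subtree_at t1 v) c2 t2"
  using S1[OF vpos, of "\<lambda>s. Node s c2 t2" "[]"] by simp

lemma tc_sh: "two_children tt (sh v u) = two_children t1 u"
  using ri_eq[OF T1] by blast
lemma lab_sh: "label_at tt (sh v u) = label_at t1 u"
  using ri_eq[OF T1] by blast
lemma pos_sh: "sh v u \<in> set (positions tt) \<longleftrightarrow> u \<in> set (positions t1)"
  using ri_eq[OF T1] pos_iff by blast
lemma tc_g: "two_children tt (v @ True # q) = two_children t2 q"
  unfolding two_children_def T2 ..
lemma lab_g: "label_at tt (v @ True # q) = label_at t2 q"
  unfolding label_at_def T2 ..
lemma pos_g: "v @ True # q \<in> set (positions tt) \<longleftrightarrow> q \<in> set (positions t2)"
  unfolding pos_iff T2 ..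
lemma tc_v: "two_children tt v"
  unfolding two_children_def T3 using vpos t2ne by simp
lemma lab_v: "label_at tt v = c2"
  unfolding label_at_def T3 by simp
lemma pos_v: "v \<in> set (positions tt)"
  unfolding pos_iff T3 by simp

lemma cand_sh: "cand tt (sh v u) w \<longleftrightarrow> (\<exists>w0. w = sh v w0 \<and> cand t1 u w0)"
proof
  assume c: "cand tt (sh v u) w"
  have "(\<exists>w0. w = sh v w0) \<or> w = v \<or> (\<exists>q. w = v @ True # q)" by (rule classify)
  then show "\<exists>w0. w = sh v w0 \<and> cand t1 u w0"
  proof (elim disjE exE)
    fix w0 assume w: "w = sh v w0"
    then show ?thesis using c by (auto simp: cand_def tc_sh L2)
  next
    assume "w = v"
    then show ?thesis using c L5[of v u] by (simp add: cand_def)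
  next
    fix q assume "w = v @ True # q"
    then show ?thesis using c L5b[of v "q @ [True]" u] by (simp add: cand_def)
  qed
next
  assume "\<exists>w0. w = sh v w0 \<and> cand t1 u w0"
  then show "cand tt (sh v u) w" by (auto simp: cand_def tc_sh L2)
qed

lemma gamma_sh: "gamma tt (sh v u) = map_option (sh v) (gamma t1 u)"
proof (cases "two_children t1 u")
  case True
  then have "two_children tt (sh v u)" using tc_sh by simp
  then show ?thesis using G1[OF True] G1[of tt "sh v u"] by simp
next
  case False
  then have ntc: "\<not> two_children tt (sh v u)" using tc_sh by simp
  show ?thesis
  proof (cases "\<exists>w0. cand t1 u w0")
    case True
    then obtain w0 where w0: "cand t1 u w0" "\<forall>w'. cand t1 u w' \<longrightarrow> prefix w' w0" using G4 by blast
    have g1: "gamma t1 u = Some w0" using G2[OF False w0(1)] w0(2) by blast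
    have "gamma tt (sh v u) = Some (sh v w0)"
    proof (rule G2[OF ntc])
      show "cand tt (sh v u) (sh v w0)" using cand_sh w0(1) by blast
      show "\<forall>w'. cand tt (sh v u) w' \<longrightarrow> prefix w' (sh v w0)"
      proof (intro allI impI)
        fix w' assume "cand tt (sh v u) w'"
        then obtain w1 where "w' = sh v w1" "cand t1 u w1" using cand_sh by blast
        then show "prefix w' (sh v w0)" using w0(2) L1 by simp
      qed
    qed
    then show ?thesis using g1 by simp
  next
    case nc: False
    have "gamma t1 u = None" using G3[OF False] nc by blast
    moreover have "gamma tt (sh v u) = None" using nc by (intro G3[OF ntc]) (simp add: cand_sh)
    ultimately show ?thesis by simp
  qed
qed

lemma cand_g: "cand tt (v @ True # q) w \<Longrightarrow> (\<exists>w0. w = v @ True # w0 \<and> cand t2 q w0) \<or> prefix w v"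
proof -
  assume c: "cand tt (v @ True # q) w"
  have "(\<exists>w0. w = sh v w0) \<or> w = v \<or> (\<exists>q. w = v @ True # q)" by (rule classify)
  then show ?thesis
  proof (elim disjE exE)
    fix w0 assume w: "w = sh v w0"
    then show ?thesis using c L8[of v w0 q] by (simp add: cand_def)
  next
    assume "w = v"
    then show ?thesis by simp
  next
    fix q' assume "w = v @ True # q'"
    then show ?thesis using c by (simp add: cand_def tc_g)
  qed
qed

lemma cand_g2: "cand t2 q w0 \<Longrightarrow> cand tt (v @ True # q) (v @ True # w0)"
  by (simp add: cand_def tc_g)

lemma cand_gv: "cand tt (v @ True # q) v"
  by (simp add: cand_def tc_v)

lemma gamma_g: "gamma tt (v @ True # q) = Some (hh v (gamma t2 q))"
proof (cases "two_children t2 q")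
  case True
  then have "two_children tt (v @ True # q)" using tc_g by simp
  then show ?thesis using G1[OF True] G1[of tt "v @ True # q"] by (simp add: hh_def)
next
  case False
  then have ntc: "\<not> two_children tt (v @ True # q)" using tc_g by simp
  show ?thesis
  proof (cases "\<exists>w0. cand t2 q w0")
    case True
    then obtain w0 where w0: "cand t2 q w0" "\<forall>w'. cand t2 q w' \<longrightarrow> prefix w' w0" using G4 by blast
    have g1: "gamma t2 q = Some w0" using G2[OF False w0(1)] w0(2) by blast
    have "gamma tt (v @ True # q) = Some (v @ True # w0)"
    proof (rule G2[OF ntc])
      show "cand tt (v @ True # q) (v @ True # w0)" using cand_g2 w0(1) by blast
      show "\<forall>w'. cand tt (v @ True # q) w' \<longrightarrow> prefix w' (v @ True # w0)"
      proof (intro allI impI)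
        fix w' assume "cand tt (v @ True # q) w'"
        then have "(\<exists>w1. w' = v @ True # w1 \<and> cand t2 q w1) \<or> prefix w' v" by (rule cand_g)
        then show "prefix w' (v @ True # w0)"
        proof
          assume "\<exists>w1. w' = v @ True # w1 \<and> cand t2 q w1"
          then show ?thesis using w0(2) by auto
        next
          assume "prefix w' v"
          then show ?thesis by (auto simp: prefix_def)
        qed
      qed
    qed
    then show ?thesis using g1 by (simp add: hh_def)
  next
    case nc: False
    have "gamma t2 q = None" using G3[OF False] nc by blast
    moreover have "gamma tt (v @ True # q) = Some v"
    proof (rule G2[OF ntc cand_gv])
      show "\<forall>w'. cand tt (v @ True # q) w' \<longrightarrow> prefix w' v"
      proof (intro allI impI)
        fix w' assume "cand tt (v @ True # q) w'"
        then have "(\<exists>w1. w' = v @ True # w1 \<and> cand t2 q w1) \<or> prefix w' v" by (rule cand_g)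
        then show "prefix w' v" using nc by blast
      qed
    qed
    ultimately show ?thesis by (simp add: hh_def)
  qed
qed

lemma gamma_v: "gamma tt v = Some v"
  by (rule G1[OF tc_v])


lemma F_sh: "FS tt (map_option (sh v) x) = sh v ` FS t1 x"
proof (intro set_eqI iffI)
  fix u assume u: "u \<in> FS tt (map_option (sh v) x)"
  have "(\<exists>u0. u = sh v u0) \<or> u = v \<or> (\<exists>q. u = v @ True # q)" by (rule classify)
  then show "u \<in> sh v ` FS t1 x"
  proof (elim disjE exE)
    fix u0 assume e: "u = sh v u0"
    then have "u0 \<in> set (positions t1)" "map_option (sh v) (gamma t1 u0) = map_option (sh v) x"
      "map_option (sh v) x \<noteq> Some (sh v u0)"
      using u by (auto simp: FS_def pos_sh gamma_sh)
    then have "u0 \<in> FS t1 x" by (auto simp: FS_def dest: map_option_sh_inj)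
    then show ?thesis using e by blast
  next
    assume "u = v"
    then have "Some v = map_option (sh v) x" using u gamma_v by (simp add: FS_def)
    then obtain a where "x = Some a" "sh v a = v" by (cases x) auto
    then show ?thesis using L6 by blast
  next
    fix q assume "u = v @ True # q"
    then have "Some (hh v (gamma t2 q)) = map_option (sh v) x" using u gamma_g by (simp add: FS_def)
    then show ?thesis using sh_hh by (cases x) (auto simp: eq_commute[of "hh v _"])
  qed
next
  fix u assume "u \<in> sh v ` FS t1 x"
  then obtain u0 where "u = sh v u0" "u0 \<in> FS t1 x" by blast
  then show "u \<in> FS tt (map_option (sh v) x)"
    by (cases x) (auto simp: FS_def pos_sh gamma_sh dest: sh_inj)
qed

lemma F_g: "FS tt (Some (hh v x)) = (\<lambda>q. v @ True # q) ` FS t2 x"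
proof (intro set_eqI iffI)
  fix u assume u: "u \<in> FS tt (Some (hh v x))"
  have "(\<exists>u0. u = sh v u0) \<or> u = v \<or> (\<exists>q. u = v @ True # q)" by (rule classify)
  then show "u \<in> (\<lambda>q. v @ True # q) ` FS t2 x"
  proof (elim disjE exE)
    fix u0 assume e: "u = sh v u0"
    then have "map_option (sh v) (gamma t1 u0) = Some (hh v x)"
      using u by (simp add: FS_def gamma_sh)
    then show ?thesis using sh_hh by (cases "gamma t1 u0") auto
  next
    assume "u = v"
    then have "gamma tt v = Some (hh v x)" "hh v x \<noteq> v" using u by (auto simp: FS_def)
    then show ?thesis using gamma_v by simp
  next
    fix q assume e: "u = v @ True # q"
    then have A: "q \<in> set (positions t2)" and B: "hh v (gamma t2 q) = hh v x" and C: "hh v x \<noteq> v @ True # q"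
      using u by (auto simp: FS_def pos_g gamma_g)
    from B have "gamma t2 q = x" by (rule hh_inj)
    moreover have "x \<noteq> Some q" using C by (auto simp: hh_def)
    ultimately have "q \<in> FS t2 x" using A by (simp add: FS_def)
    then show ?thesis using e by blast
  qed
next
  fix u assume "u \<in> (\<lambda>q. v @ True # q) ` FS t2 x"
  then obtain q where "u = v @ True # q" "q \<in> FS t2 x" by blast
  then show "u \<in> FS tt (Some (hh v x))"
    by (cases x) (auto simp: FS_def pos_g gamma_g hh_def)
qed

lemma FS_chain: "a \<in> FS t x \<Longrightarrow> b \<in> FS t x \<Longrightarrow> prefix a b \<or> prefix b a"
  unfolding FS_def by (rule chain) auto

lemma fac_sh: "factor (tt, c1) (map_option (sh v) x) = factor (t1, c1) x"
proof -
  have "induce tt [u\<leftarrow>positions tt. gamma tt u = map_option (sh v) x \<and> map_option (sh v) x \<noteq> Some u]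
      = induce t1 [u\<leftarrow>positions t1. gamma t1 u = x \<and> x \<noteq> Some u]"
  proof (rule induce_transfer[where f = "sh v"])
    show "set [u\<leftarrow>positions tt. gamma tt u = map_option (sh v) x \<and> map_option (sh v) x \<noteq> Some u]
       = sh v ` set [u\<leftarrow>positions t1. gamma t1 u = x \<and> x \<noteq> Some u]"
      using F_sh[of x] unfolding FS_def set_filter .
  qed (auto simp: L1 L2 lab_sh FS_chain[unfolded FS_def])
  moreover have "(case map_option (sh v) x of None \<Rightarrow> c1 | Some p \<Rightarrow> label_at tt p)
      = (case x of None \<Rightarrow> c1 | Some p \<Rightarrow> label_at t1 p)"
    by (cases x) (auto simp: lab_sh)
  ultimately show ?thesis unfolding factor_def fst_conv snd_conv prod.inject by (rule conjI)
qed

lemma fac_g: "factor (tt, c1) (Some (hh v x)) = factor (t2, c2) x"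
proof -
  have "induce tt [u\<leftarrow>positions tt. gamma tt u = Some (hh v x) \<and> Some (hh v x) \<noteq> Some u]
      = induce t2 [u\<leftarrow>positions t2. gamma t2 u = x \<and> x \<noteq> Some u]"
  proof (rule induce_transfer[where f = "\<lambda>q. v @ True # q"])
    show "set [u\<leftarrow>positions tt. gamma tt u = Some (hh v x) \<and> Some (hh v x) \<noteq> Some u]
       = (\<lambda>q. v @ True # q) ` set [u\<leftarrow>positions t2. gamma t2 u = x \<and> x \<noteq> Some u]"
      using F_g[of x] unfolding FS_def set_filter .
  qed (auto simp: lab_g FS_chain[unfolded FS_def])
  moreover have "label_at tt (hh v x) = (case x of None \<Rightarrow> c2 | Some p \<Rightarrow> label_at t2 p)"
    by (cases x) (auto simp: lab_g lab_v hh_def)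
  ultimately show ?thesis unfolding factor_def fst_conv snd_conv prod.inject option.case(2) by (rule conjI)
qed

lemma Lambda_set: "set (Lambda tt) = map_option (sh v) ` set (Lambda t1) \<union> (\<lambda>x. Some (hh v x)) ` set (Lambda t2)"
proof (intro set_eqI iffI)
  fix y assume y: "y \<in> set (Lambda tt)"
  show "y \<in> map_option (sh v) ` set (Lambda t1) \<union> (\<lambda>x. Some (hh v x)) ` set (Lambda t2)"
  proof (cases y)
    case None
    then show ?thesis by (auto simp: Lambda_def intro: image_eqI[of None _ None])
  next
    case (Some p)
    then have p: "p \<in> set (positions tt)" "two_children tt p" using y by (auto simp: Lambda_def)
    have "(\<exists>u0. p = sh v u0) \<or> p = v \<or> (\<exists>q. p = v @ True # q)" by (rule classify)
    then show ?thesis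
    proof (elim disjE exE)
      fix u0 assume e: "p = sh v u0"
      then have "Some u0 \<in> set (Lambda t1)" using p by (auto simp: Lambda_def pos_sh tc_sh)
      then show ?thesis using Some e by force
    next
      assume "p = v"
      then show ?thesis using Some by (force simp: Lambda_def hh_def)
    next
      fix q assume e: "p = v @ True # q"
      then have "Some q \<in> set (Lambda t2)" using p by (auto simp: Lambda_def pos_g tc_g)
      then show ?thesis using Some e by (force simp: hh_def)
    qed
  qed
next
  fix y assume "y \<in> map_option (sh v) ` set (Lambda t1) \<union> (\<lambda>x. Some (hh v x)) ` set (Lambda t2)"
  then show "y \<in> set (Lambda tt)"
    by (auto simp: Lambda_def pos_sh tc_sh pos_g tc_g pos_v tc_v hh_def split: option.splits)
qed

end


lemma distinct_Lambda: "distinct (Lambda t)"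
  by (simp add: Lambda_def distinct_map distinct_positions inj_on_def)

lemma IF_set: "IF T = image_mset (factor T) (mset_set (set (Lambda (fst T))))"
  by (simp add: IF_def mset_set_set distinct_Lambda)

theorem proposition3p1:
  fixes T1 T2 :: "'a ctree" and v :: "bool list"
  assumes "fst T1 \<noteq> Leaf" and "fst T2 \<noteq> Leaf" and "v \<in> set (positions (fst T1))"
  shows "IF (insertion v T1 T2) = IF T1 + IF T2"
proof -
  obtain t1 c1 where T1: "T1 = (t1, c1)" by (cases T1)
  obtain t2 c2 where T2: "T2 = (t2, c2)" by (cases T2)
  have vpos: "subtree_at t1 v \<noteq> Leaf" using assms(3) T1 pos_iff by auto
  have t2ne: "t2 \<noteq> Leaf" using assms(2) T2 by simp
  have ins: "insertion v T1 T2 = (upd_at (\<lambda>s. Node s c2 t2) v t1, c1)" by (simp add: insertion_def T1 T2)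
  let ?t = "upd_at (\<lambda>s. Node s c2 t2) v t1"
  let ?F = "factor (?t, c1)"
  let ?A = "set (Lambda t1)"
  let ?B = "set (Lambda t2)"
  let ?h1 = "map_option (sh v)"
  let ?h2 = "\<lambda>x. Some (hh v x)"
  have inj1: "inj_on ?h1 ?A" by (auto intro: inj_onI map_option_sh_inj)
  have inj2: "inj_on ?h2 ?B" by (auto intro!: inj_onI dest: hh_inj)
  have disj: "?h1 ` ?A \<inter> ?h2 ` ?B = {}"
  proof -
    { fix a b assume "?h1 a = ?h2 b"
      then have False using sh_hh by (cases a) auto }
    then show ?thesis by blast
  qed
  have "IF (insertion v T1 T2) = image_mset ?F (mset_set (?h1 ` ?A \<union> ?h2 ` ?B))"
    unfolding ins IF_set fst_conv Lambda_set[OF vpos t2ne] ..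
  also have "\<dots> = image_mset ?F (mset_set (?h1 ` ?A)) + image_mset ?F (mset_set (?h2 ` ?B))"
    by (simp add: mset_set_Union disj)
  also have "image_mset ?F (mset_set (?h1 ` ?A)) = image_mset (factor (t1, c1)) (mset_set ?A)"
    unfolding image_mset_mset_set[OF inj1, symmetric] multiset.map_comp comp_def
      fac_sh[OF vpos t2ne] ..
  also have "image_mset ?F (mset_set (?h2 ` ?B)) = image_mset (factor (t2, c2)) (mset_set ?B)"
    unfolding image_mset_mset_set[OF inj2, symmetric] multiset.map_comp comp_def
      fac_g[OF vpos t2ne] ..
  finally show ?thesis by (simp add: IF_set T1 T2)
qed

end
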